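(* Let $(\Phi,\mathtt{Prg},\mathrm{AT})$ be a CLC SPL with $\Phi=(\mathcal F,\phi)$, let $p$ be a valid product, and let $\mathcal D$ be a derivation of $\phi\vdash\mathtt{Prg}\ \textsc{ok}$ in the family-based type system. If a judgment $\theta;\Delta\vdash e:T$ occurs in $\mathcal D$ and $p\models\theta$, then $[\![\Delta]\!]_p\vdash\langle\!\langle e\rangle\!\rangle_p:T$ is derivable in the LC type system relative to the variant program $[\![\mathtt{Prg}]\!]_p$. Moreover, there is such an LC derivation in which every struct name $s$ appearing satisfies $p\models\mathrm{AT}(\mathtt{Prg}(s))$.
   Context: **Lightweight C (LC).** Types: $T ::= \mathtt{int}\mid \mathtt{void}* \mid \mathtt{struct}\ s*$ ($s$ a struct name). Expressions: $e ::= n$ (integer literal) $\mid \mathtt{NULL}\mid x$ (parameter name) $\mid f(e_1,\dots,e_k)$ ($k\ge0$) $\mid e\texttt{->}m \mid e\texttt{->}m=e \mid e\,?\,e:e \mid (e_1,\dots,e_k)$ ($k\ge1$, a parenthesized expression sequence) $\mid \mathsf{uop}\ e\mid e\ \mathsf{bop}\ e\mid \mathtt{MALLOC}(\mathtt{struct}\ s)\mid \mathtt{MFREE}(e)$. A struct definition is $\mathtt{struct}\ s\{T_1\,m_1;\dots;T_k\,m_k;\};$ (distinct member names); a function definition is $T_0\ f(T_1\,x_1,\dots,T_k\,x_k)\{\mathtt{return}\ e;\}$ (distinct parameter names); a program $\mathtt{Prg}=\overline{SD}\ \overline{FD}$ is a sequence of struct definitions followed by a sequence of function definitions, with distinct struct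 names and distinct function names. $\mathtt{Prg}$ is regarded as a finite map: $\mathtt{Prg}(s)$ is the definition of struct $s$, $\mathtt{Prg}(s)(m)=$ "$T\ m$" is the declaration of member $m$ in it, $\mathtt{Prg}(f)$ is the definition of function $f$; $\mathrm{dom}(\overline{SD})$ is the set of defined struct names. $\mathtt{Prg}$ is *sane* if (1) every struct name occurring anywhere in $\mathtt{Prg}$ is defined in $\mathtt{Prg}$, (2) every function name occurring in the function definitions is defined in $\mathtt{Prg}$, (3) $\mathtt{Prg}(\mathtt{main})=\mathtt{int\ main}()\{\mathtt{return}\ e;\}$ for some $e$. Operator types: unary $-:(\mathtt{int})\to\mathtt{int}$; unary $!:(T)\to\mathtt{int}$ for every type $T$; binary $+,-,*,/,\&\&,||,<,<=,>,>=:(\mathtt{int},\mathtt{int})\to\mathtt{int}$; binary $==,!=:(T,T)\to\mathtt{int}$ for every type $T$. Subtyping $\le$ is the reflexive closure of $\mathtt{void}*\le\mathtt{struct}\ s*$ for every struct $s$ defined in the program; $\max_\le\{T_1,T_2\}$ is the greater of two $\le$-comparable types. LC typing (relative to the program under consideration; $\Gamma$ a finite map from parameter names to types): (T-int) $\Gamma\vdash n:\mathtt{int}$. (T-null) $\Gamma\vdash\mathtt{NULL}:\mathtt{void}*$. (T-par) if $x{:}T\in\Gamma$ then $\Gamma\vdash x:T$. (T-app) if $\mathtt{Prg}(f)=T_0\,f(T_1x_1,\dots,T_kx_k)\{\dots\}$, and $\Gamma\vdash e_i:T_i'$, $T_i'\le T_i$ for $i=1..k$ (exactly $k$ arguments),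 then $\Gamma\vdash f(e_1,\dots,e_k):T_0$. (T-member) if $\Gamma\vdash e_0:\mathtt{struct}\ s*$ and $\mathtt{Prg}(s)(m)=T\,m$ then $\Gamma\vdash e_0\texttt{->}m:T$. (T-assign) if additionally $\Gamma\vdash e_1:T_1$, $T_1\le T$, then $\Gamma\vdash e_0\texttt{->}m=e_1:T$. (T-cond) if $\Gamma\vdash e_j:T_j$ ($j=0,1,2$) and $T_3=\max_\le\{T_1,T_2\}$ then $\Gamma\vdash e_0?e_1:e_2:T_3$. (T-seq) if $\Gamma\vdash e_i:T_i$ for $i=1..n$ then $\Gamma\vdash(e_1,\dots,e_n):T_n$. (T-uop) if $\Gamma\vdash e_0:T_0$ and $\mathsf{uop}$ has type $(T_0)\to\mathtt{int}$ then $\Gamma\vdash\mathsf{uop}\,e_0:\mathtt{int}$. (T-bop) if $\Gamma\vdash e_1:T_1$, $\Gamma\vdash e_2:T_2$, $T_3=\max_\le\{T_1,T_2\}$ and $\mathsf{bop}$ has type $(T_3,T_3)\to\mathtt{int}$ then $\Gamma\vdash e_1\,\mathsf{bop}\,e_2:\mathtt{int}$. (T-malloc) if $s\in\mathrm{dom}(\overline{SD})$ then $\Gamma\vdash\mathtt{MALLOC}(\mathtt{struct}\ s):\mathtt{struct}\ s*$. (T-mfree) if $\Gamma\vdash e_0:\mathtt{struct}\ s*$ then $\Gamma\vdash\mathtt{MFREE}(e_0):\mathtt{void}*$. **Colored LC (CLC).** A feature model $\Phi=(\mathcal F,\phi)$: $\mathcal F$ a finite set of features, $\phi$ a propositional formula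 over $\mathcal F$ (connectives $!,\&\&,||$, constants $0,1$). A product is $p\subseteq\mathcal F$; $p\models\psi$ means $\psi$ is true under the assignment giving 1 to features in $p$ and 0 to the others; $p$ is valid if $p\models\phi$. For formulas, $\theta\models\theta'$ means $\theta\Rightarrow\theta'$ is valid; $\psi_1\Rightarrow\psi_2$ abbreviates $!\psi_1||\psi_2$ and $\psi_1\Leftrightarrow\psi_2$ the conjunction of both implications. An SPL is a triple $(\Phi,\mathtt{Prg},\mathrm{AT})$ with $\mathtt{Prg}$ an LC program (the code base) and $\mathrm{AT}$ an annotation table assigning a propositional formula over $\mathcal F$ to each occurrence of an annotable fragment of $\mathtt{Prg}$; annotable fragments are: each struct definition, each member declaration $T\,m$, each function definition, each formal parameter declaration $T\,x$, each argument of a function call, and each element of a parenthesized sequence. Occurrences not explicitly annotated have annotation $1$. Abbreviations: $\mathrm{AT}(s)=\mathrm{AT}(\mathtt{Prg}(s))$, $\mathrm{AT}(f)=\mathrm{AT}(\mathtt{Prg}(f))$; $\mathrm{AT}(\mathtt{int})=\mathrm{AT}(\mathtt{void}* )=1$, $\mathrm{AT}(\mathtt{struct}\ s* )=\mathrm{AT}(\mathtt{Prg}(s))$; $\exists(e_1,\dots,e_n)=\mathrm{AT}(e_1)||\cdots||\mathrm{AT}(e_n)$; $\mathtt{neverLast}(k,(e_1,\dots,e_n))=\,!\mathrm{AT}(e_k)||\mathrm{AT}(e_{k+1})||\cdots||\mathrm{AT}(e_n)$. An annotated type environment $\Delta$ maps parameter names to pairs written $x{:}T$ with $\psi$; $[\![\Delta]\!]_p$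 is the (LC) type environment $\{x{:}T \mid x{:}T\text{ with }\psi\text{ is in }\Delta,\ p\models\psi\}$. Family-based typing: (FT-prg) if $\mathtt{Prg}$ is sane, $\mathrm{AT}(\mathtt{main})=1$, $\mathtt{Prg}=\overline{SD}\,\overline{FD}$, $\phi\,\&\&\,\mathrm{AT}(SD)\vdash SD\ \textsc{ok}$ for each $SD$ in $\overline{SD}$ and $\phi\,\&\&\,\mathrm{AT}(FD)\vdash FD\ \textsc{ok}$ for each $FD$ in $\overline{FD}$, then $\phi\vdash\mathtt{Prg}\ \textsc{ok}$. (FT-struct) if $\theta\models\mathrm{AT}(T_i\,m_i)\Rightarrow\mathrm{AT}(T_i)$ for all $i$, then $\theta\vdash\mathtt{struct}\ s\{T_1m_1;\dots;T_km_k;\}\ \textsc{ok}$. (FT-fun) if $\theta\models\mathrm{AT}(T_0)$, $\theta\models\mathrm{AT}(T_i\,x_i)\Rightarrow\mathrm{AT}(T_i)$ for all $i$, $\theta;\ x_1{:}T_1\text{ with }\mathrm{AT}(T_1x_1),\dots,x_k{:}T_k\text{ with }\mathrm{AT}(T_kx_k)\vdash e:T'$ and $T'\le T_0$, then $\theta\vdash T_0\,f(T_1x_1,\dots,T_kx_k)\{\mathtt{return}\ e;\}\ \textsc{ok}$. (FT-int) $\theta;\Delta\vdash n:\mathtt{int}$. (FT-null) $\theta;\Delta\vdash\mathtt{NULL}:\mathtt{void}*$. (FT-par) if $x{:}T$ with $\psi$ is in $\Delta$ and $\theta\models\psi$ then $\theta;\Delta\vdash x:T$. (FT-app) if $\mathtt{Prg}(f)=T_0\,f(T_1x_1,\dots,T_kx_k)\{\dots\}$,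 $\theta\models\mathrm{AT}(\mathtt{Prg}(f))$, and for $i=1..k$ (exactly $k$ arguments) $\theta;\Delta\vdash e_i:T_i'$, $T_i'\le T_i$ and $\theta\models\mathrm{AT}(e_i)\Leftrightarrow\mathrm{AT}(T_ix_i)$, then $\theta;\Delta\vdash f(e_1,\dots,e_k):T_0$. (FT-member) if $\theta;\Delta\vdash e_0:\mathtt{struct}\ s*$, $\mathtt{Prg}(s)(m)=T\,m$ and $\theta\models\mathrm{AT}(T\,m)$ then $\theta;\Delta\vdash e_0\texttt{->}m:T$. (FT-assign) if additionally $\theta;\Delta\vdash e_1:T_1$ and $T_1\le T$ then $\theta;\Delta\vdash e_0\texttt{->}m=e_1:T$. (FT-cond), (FT-uop), (FT-bop), (FT-mfree): as T-cond, T-uop, T-bop, T-mfree with every judgment $\Gamma\vdash$ replaced by $\theta;\Delta\vdash$. (FT-seq) if $\theta\models\exists(e_1,\dots,e_n)$, $\theta\,\&\&\,\mathrm{AT}(e_i);\Delta\vdash e_i:T_i$ for all $i$, $T=T_n$, and $\theta\models\mathtt{neverLast}(i,(e_1,\dots,e_n))$ for every $i$ with $T_i\ne T$, then $\theta;\Delta\vdash(e_1,\dots,e_n):T$. (FT-malloc) if $s\in\mathrm{dom}(\overline{SD})$ and $\theta\models\mathrm{AT}(\mathtt{Prg}(s))$ then $\theta;\Delta\vdash\mathtt{MALLOC}(\mathtt{struct}\ s):\mathtt{struct}\ s*$. **Variant generation.** For a product $p$ and a sequence of annotable occurrences: $[\![\,]\!]_p$ is empty; $[\![a_1\dots a_n]\!]_p=\langle\!\langle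 a_1\rangle\!\rangle_p\,[\![a_2\dots a_n]\!]_p$ if $p\models\mathrm{AT}(a_1)$, and $=[\![a_2\dots a_n]\!]_p$ otherwise. $\langle\!\langle\mathtt{struct}\ s\{\overline{T\,m};\}\rangle\!\rangle_p=\mathtt{struct}\ s\{[\![\overline{T\,m}]\!]_p\}$; $\langle\!\langle T_0f(\overline{T\,x})\{\mathtt{return}\ e;\}\rangle\!\rangle_p=T_0f([\![\overline{T\,x}]\!]_p)\{\mathtt{return}\ \langle\!\langle e\rangle\!\rangle_p;\}$; $\langle\!\langle T\,m\rangle\!\rangle_p=T\,m$, $\langle\!\langle T\,x\rangle\!\rangle_p=T\,x$; $\langle\!\langle f(\bar e)\rangle\!\rangle_p=f([\![\bar e]\!]_p)$; $\langle\!\langle(\tilde e)\rangle\!\rangle_p=([\![\tilde e]\!]_p)$; on all other expression forms $\langle\!\langle\cdot\rangle\!\rangle_p$ acts homomorphically on immediate subexpressions ($n$, $\mathtt{NULL}$, $x$, $\mathtt{MALLOC}(\mathtt{struct}\ s)$ unchanged). The variant is $[\![\mathtt{Prg}]\!]_p=[\![\overline{SD}]\!]_p\,[\![\overline{FD}]\!]_p$ for $\mathtt{Prg}=\overline{SD}\,\overline{FD}$. *)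

theory Defs
  imports Main
begin

text \<open>Annotations of annotable fragments are stored directly in the syntax tree:
 an annotated (CLC) code base has annotations of type \<open>'f form\<close>, a plain LC
 program has annotations of type \<open>unit\<close> (i.e. no annotations).\<close>

type_synonym sname = string
type_synonym fname = string
type_synonym mname = string
type_synonym vname = string

datatype ty = TInt | TVoidPtr | TStructPtr sname

datatype uop = UMinus | UNot
datatype bop = BAdd | BSub | BMul | BDiv | BAnd | BOr | BLt | BLe | BGt | BGe | BEq | BNeq

datatype 'a expr =
    Num int
  | Null
  | Par vname
  | Call fname "('a \<times> 'a expr) list"
  | Mem "'a expr" mname
  | Assign "'a expr" mname "'a expr"
  | Cond "'a expr" "'a expr" "'a expr"
  | Seq "('a \<times> 'a expr) list"
  | Uop uop "'a expr"
  | Bop bop "'a expr" "'a expr"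
  | Malloc sname
  | Mfree "'a expr"

text \<open>struct s { T1 m1; ...; Tk mk; } with an annotation for each member declaration\<close>
datatype 'a sdef = SDef sname "('a \<times> ty \<times> mname) list"

text \<open>T0 f(T1 x1, ..., Tk xk) { return e; } with an annotation for each parameter\<close>
datatype 'a fdef = FDef ty fname "('a \<times> ty \<times> vname) list" "'a expr"

datatype 'a prog = Prog "('a \<times> 'a sdef) list" "('a \<times> 'a fdef) list"

fun sname_of :: "'a sdef \<Rightarrow> sname" where "sname_of (SDef s _) = s"
fun fname_of :: "'a fdef \<Rightarrow> fname" where "fname_of (FDef _ f _ _) = f"

fun sdefs :: "'a prog \<Rightarrow> ('a \<times> 'a sdef) list" where "sdefs (Prog sds fds) = sds"
fun fdefs :: "'a prog \<Rightarrow> ('a \<times> 'a fdef) list" where "fdefs (Prog sds fds) = fds"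

definition lookup_struct :: "'a prog \<Rightarrow> sname \<Rightarrow> ('a \<times> 'a sdef) option" where
  "lookup_struct P s = map_of (map (\<lambda>(a, sd). (sname_of sd, (a, sd))) (sdefs P)) s"

definition lookup_fun :: "'a prog \<Rightarrow> fname \<Rightarrow> ('a \<times> 'a fdef) option" where
  "lookup_fun P f = map_of (map (\<lambda>(a, fd). (fname_of fd, (a, fd))) (fdefs P)) f"

definition struct_names :: "'a prog \<Rightarrow> sname set" where
  "struct_names P = sname_of ` snd ` set (sdefs P)"

fun member_decl :: "'a sdef \<Rightarrow> mname \<Rightarrow> ('a \<times> ty) option" where
  "member_decl (SDef s ms) m = map_of (map (\<lambda>(a, T, m'). (m', (a, T))) ms) m"

definition lookup_member :: "'a prog \<Rightarrow> sname \<Rightarrow> mname \<Rightarrow> ('a \<times> ty) option" where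
  "lookup_member P s m =
     (case lookup_struct P s of None \<Rightarrow> None | Some (_, sd) \<Rightarrow> member_decl sd m)"

definition subty :: "'a prog \<Rightarrow> ty \<Rightarrow> ty \<Rightarrow> bool" where
  "subty P T1 T2 \<longleftrightarrow> T1 = T2 \<or> (\<exists>s. T1 = TVoidPtr \<and> T2 = TStructPtr s \<and> s \<in> struct_names P)"

definition is_max :: "'a prog \<Rightarrow> ty \<Rightarrow> ty \<Rightarrow> ty \<Rightarrow> bool" where
  "is_max P T1 T2 T3 \<longleftrightarrow> (subty P T1 T2 \<and> T3 = T2) \<or> (subty P T2 T1 \<and> T3 = T1)"

fun uop_ok :: "uop \<Rightarrow> ty \<Rightarrow> bool" where
  "uop_ok UMinus T = (T = TInt)"
| "uop_ok UNot T = True"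

fun bop_ok :: "bop \<Rightarrow> ty \<Rightarrow> bool" where
  "bop_ok BEq T = True"
| "bop_ok BNeq T = True"
| "bop_ok _ T = (T = TInt)"

fun expr_snames :: "'a expr \<Rightarrow> sname set"
and args_snames :: "('a \<times> 'a expr) list \<Rightarrow> sname set" where
  "expr_snames (Num n) = {}"
| "expr_snames Null = {}"
| "expr_snames (Par x) = {}"
| "expr_snames (Call f args) = args_snames args"
| "expr_snames (Mem e m) = expr_snames e"
| "expr_snames (Assign e m e') = expr_snames e \<union> expr_snames e'"
| "expr_snames (Cond e0 e1 e2) = expr_snames e0 \<union> expr_snames e1 \<union> expr_snames e2"
| "expr_snames (Seq es) = args_snames es"
| "expr_snames (Uop u e) = expr_snames e"
| "expr_snames (Bop b e1 e2) = expr_snames e1 \<union> expr_snames e2"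
| "expr_snames (Malloc s) = {s}"
| "expr_snames (Mfree e) = expr_snames e"
| "args_snames [] = {}"
| "args_snames ((a, e) # es) = expr_snames e \<union> args_snames es"

fun expr_fnames :: "'a expr \<Rightarrow> fname set"
and args_fnames :: "('a \<times> 'a expr) list \<Rightarrow> fname set" where
  "expr_fnames (Num n) = {}"
| "expr_fnames Null = {}"
| "expr_fnames (Par x) = {}"
| "expr_fnames (Call f args) = insert f (args_fnames args)"
| "expr_fnames (Mem e m) = expr_fnames e"
| "expr_fnames (Assign e m e') = expr_fnames e \<union> expr_fnames e'"
| "expr_fnames (Cond e0 e1 e2) = expr_fnames e0 \<union> expr_fnames e1 \<union> expr_fnames e2"
| "expr_fnames (Seq es) = args_fnames es"
| "expr_fnames (Uop u e) = expr_fnames e"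
| "expr_fnames (Bop b e1 e2) = expr_fnames e1 \<union> expr_fnames e2"
| "expr_fnames (Malloc s) = {}"
| "expr_fnames (Mfree e) = expr_fnames e"
| "args_fnames [] = {}"
| "args_fnames ((a, e) # es) = expr_fnames e \<union> args_fnames es"

fun expr_wf :: "'a expr \<Rightarrow> bool"
and args_wf :: "('a \<times> 'a expr) list \<Rightarrow> bool" where
  "expr_wf (Num n) = True"
| "expr_wf Null = True"
| "expr_wf (Par x) = True"
| "expr_wf (Call f args) = args_wf args"
| "expr_wf (Mem e m) = expr_wf e"
| "expr_wf (Assign e m e') = (expr_wf e \<and> expr_wf e')"
| "expr_wf (Cond e0 e1 e2) = (expr_wf e0 \<and> expr_wf e1 \<and> expr_wf e2)"
| "expr_wf (Seq es) = (es \<noteq> [] \<and> args_wf es)"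
| "expr_wf (Uop u e) = expr_wf e"
| "expr_wf (Bop b e1 e2) = (expr_wf e1 \<and> expr_wf e2)"
| "expr_wf (Malloc s) = True"
| "expr_wf (Mfree e) = expr_wf e"
| "args_wf [] = True"
| "args_wf ((a, e) # es) = (expr_wf e \<and> args_wf es)"

fun ty_snames :: "ty \<Rightarrow> sname set" where
  "ty_snames (TStructPtr s) = {s}"
| "ty_snames _ = {}"

fun sdef_wf :: "'a sdef \<Rightarrow> bool" where
  "sdef_wf (SDef s ms) = distinct (map (\<lambda>(a, T, m). m) ms)"

fun fdef_wf :: "'a fdef \<Rightarrow> bool" where
  "fdef_wf (FDef T f xs e) = (distinct (map (\<lambda>(a, T, x). x) xs) \<and> expr_wf e)"

definition prog_wf :: "'a prog \<Rightarrow> bool" where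
  "prog_wf P \<longleftrightarrow>
     distinct (map (sname_of \<circ> snd) (sdefs P)) \<and>
     distinct (map (fname_of \<circ> snd) (fdefs P)) \<and>
     (\<forall>(a, sd) \<in> set (sdefs P). sdef_wf sd) \<and>
     (\<forall>(a, fd) \<in> set (fdefs P). fdef_wf fd)"

fun sdef_snames :: "'a sdef \<Rightarrow> sname set" where
  "sdef_snames (SDef s ms) = insert s (\<Union>(a, T, m) \<in> set ms. ty_snames T)"

fun fdef_snames :: "'a fdef \<Rightarrow> sname set" where
  "fdef_snames (FDef T f xs e) =
     ty_snames T \<union> (\<Union>(a, T', x) \<in> set xs. ty_snames T') \<union> expr_snames e"

fun fdef_fnames :: "'a fdef \<Rightarrow> fname set" where
  "fdef_fnames (FDef T f xs e) = expr_fnames e"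

definition sane :: "'a prog \<Rightarrow> bool" where
  "sane P \<longleftrightarrow>
     (\<Union>(a, sd) \<in> set (sdefs P). sdef_snames sd) \<union> (\<Union>(a, fd) \<in> set (fdefs P). fdef_snames fd)
       \<subseteq> struct_names P \<and>
     (\<Union>(a, fd) \<in> set (fdefs P). fdef_fnames fd) \<subseteq> fname_of ` snd ` set (fdefs P) \<and>
     (\<exists>a e. lookup_fun P ''main'' = Some (a, FDef TInt ''main'' [] e))"

datatype 'j dtree = DNode 'j "'j dtree list"

fun droot :: "'j dtree \<Rightarrow> 'j" where "droot (DNode j ts) = j"

inductive valid_dtree :: "('j list \<Rightarrow> 'j \<Rightarrow> bool) \<Rightarrow> 'j dtree \<Rightarrow> bool" for R where
  "R (map droot ts) j \<Longrightarrow> (\<forall>t \<in> set ts. valid_dtree R t) \<Longrightarrow> valid_dtree R (DNode j ts)"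

inductive occurs_in :: "'j \<Rightarrow> 'j dtree \<Rightarrow> bool" where
  "occurs_in j (DNode j ts)"
| "t \<in> set ts \<Longrightarrow> occurs_in j t \<Longrightarrow> occurs_in j (DNode j' ts)"

type_synonym tenv = "vname \<Rightarrow> ty option"

datatype lc_judg = LJ tenv "unit expr" ty

inductive lc_rule :: "unit prog \<Rightarrow> lc_judg list \<Rightarrow> lc_judg \<Rightarrow> bool" for P where
  T_int: "lc_rule P [] (LJ \<Gamma> (Num n) TInt)"
| T_null: "lc_rule P [] (LJ \<Gamma> Null TVoidPtr)"
| T_par: "\<Gamma> x = Some T \<Longrightarrow> lc_rule P [] (LJ \<Gamma> (Par x) T)"
| T_app: "lookup_fun P f = Some (b, FDef T0 f ps body) \<Longrightarrow>
          length args = length ps \<Longrightarrow> length Ts' = length args \<Longrightarrow>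
          (\<forall>i < length args. subty P (Ts' ! i) (fst (snd (ps ! i)))) \<Longrightarrow>
          lc_rule P (map (\<lambda>((a, e), T'). LJ \<Gamma> e T') (zip args Ts')) (LJ \<Gamma> (Call f args) T0)"
| T_member: "lookup_member P s m = Some (b, T) \<Longrightarrow>
          lc_rule P [LJ \<Gamma> e0 (TStructPtr s)] (LJ \<Gamma> (Mem e0 m) T)"
| T_assign: "lookup_member P s m = Some (b, T) \<Longrightarrow> subty P T1 T \<Longrightarrow>
          lc_rule P [LJ \<Gamma> e0 (TStructPtr s), LJ \<Gamma> e1 T1] (LJ \<Gamma> (Assign e0 m e1) T)"
| T_cond: "is_max P T1 T2 T3 \<Longrightarrow>
          lc_rule P [LJ \<Gamma> e0 T0, LJ \<Gamma> e1 T1, LJ \<Gamma> e2 T2] (LJ \<Gamma> (Cond e0 e1 e2) T3)"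
| T_seq: "es \<noteq> [] \<Longrightarrow> length Ts = length es \<Longrightarrow>
          lc_rule P (map (\<lambda>((a, e), T). LJ \<Gamma> e T) (zip es Ts)) (LJ \<Gamma> (Seq es) (last Ts))"
| T_uop: "uop_ok u T0 \<Longrightarrow> lc_rule P [LJ \<Gamma> e0 T0] (LJ \<Gamma> (Uop u e0) TInt)"
| T_bop: "is_max P T1 T2 T3 \<Longrightarrow> bop_ok b T3 \<Longrightarrow>
          lc_rule P [LJ \<Gamma> e1 T1, LJ \<Gamma> e2 T2] (LJ \<Gamma> (Bop b e1 e2) TInt)"
| T_malloc: "s \<in> struct_names P \<Longrightarrow> lc_rule P [] (LJ \<Gamma> (Malloc s) (TStructPtr s))"
| T_mfree: "lc_rule P [LJ \<Gamma> e0 (TStructPtr s)] (LJ \<Gamma> (Mfree e0) TVoidPtr)"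

fun lj_snames :: "lc_judg \<Rightarrow> sname set" where
  "lj_snames (LJ \<Gamma> e T) = (\<Union>T' \<in> ran \<Gamma>. ty_snames T') \<union> expr_snames e \<union> ty_snames T"

definition dtree_snames :: "lc_judg dtree \<Rightarrow> sname set" where
  "dtree_snames D = (\<Union>{lj_snames j | j. occurs_in j D})"

datatype 'f form = FVar 'f | FNot "'f form" | FAnd "'f form" "'f form" | FOr "'f form" "'f form"
  | FFalse | FTrue

fun sat :: "'f set \<Rightarrow> 'f form \<Rightarrow> bool" where
  "sat p (FVar f) = (f \<in> p)"
| "sat p (FNot a) = (\<not> sat p a)"
| "sat p (FAnd a b) = (sat p a \<and> sat p b)"
| "sat p (FOr a b) = (sat p a \<or> sat p b)"
| "sat p FFalse = False"
| "sat p FTrue = True"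

fun fvars :: "'f form \<Rightarrow> 'f set" where
  "fvars (FVar f) = {f}"
| "fvars (FNot a) = fvars a"
| "fvars (FAnd a b) = fvars a \<union> fvars b"
| "fvars (FOr a b) = fvars a \<union> fvars b"
| "fvars FFalse = {}"
| "fvars FTrue = {}"

definition FImp :: "'f form \<Rightarrow> 'f form \<Rightarrow> 'f form" where "FImp a b = FOr (FNot a) b"
definition FIff :: "'f form \<Rightarrow> 'f form \<Rightarrow> 'f form" where "FIff a b = FAnd (FImp a b) (FImp b a)"

definition entails :: "'f form \<Rightarrow> 'f form \<Rightarrow> bool" where
  "entails \<theta> \<theta>' \<longleftrightarrow> (\<forall>p. sat p (FImp \<theta> \<theta>'))"

definition valid_product :: "'f set \<Rightarrow> 'f form \<Rightarrow> 'f set \<Rightarrow> bool" where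
  "valid_product F \<phi> p \<longleftrightarrow> p \<subseteq> F \<and> sat p \<phi>"

fun expr_annots :: "'a expr \<Rightarrow> 'a set"
and args_annots :: "('a \<times> 'a expr) list \<Rightarrow> 'a set" where
  "expr_annots (Num n) = {}"
| "expr_annots Null = {}"
| "expr_annots (Par x) = {}"
| "expr_annots (Call f args) = args_annots args"
| "expr_annots (Mem e m) = expr_annots e"
| "expr_annots (Assign e m e') = expr_annots e \<union> expr_annots e'"
| "expr_annots (Cond e0 e1 e2) = expr_annots e0 \<union> expr_annots e1 \<union> expr_annots e2"
| "expr_annots (Seq es) = args_annots es"
| "expr_annots (Uop u e) = expr_annots e"
| "expr_annots (Bop b e1 e2) = expr_annots e1 \<union> expr_annots e2"
| "expr_annots (Malloc s) = {}"
| "expr_annots (Mfree e) = expr_annots e"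
| "args_annots [] = {}"
| "args_annots ((a, e) # es) = insert a (expr_annots e \<union> args_annots es)"

fun sdef_annots :: "'a sdef \<Rightarrow> 'a set" where
  "sdef_annots (SDef s ms) = (\<lambda>(a, T, m). a) ` set ms"

fun fdef_annots :: "'a fdef \<Rightarrow> 'a set" where
  "fdef_annots (FDef T f xs e) = (\<lambda>(a, T, x). a) ` set xs \<union> expr_annots e"

definition prog_annots :: "'a prog \<Rightarrow> 'a set" where
  "prog_annots P = (\<Union>(a, sd) \<in> set (sdefs P). insert a (sdef_annots sd))
                 \<union> (\<Union>(a, fd) \<in> set (fdefs P). insert a (fdef_annots fd))"

definition is_spl :: "'f set \<Rightarrow> 'f form \<Rightarrow> 'f form prog \<Rightarrow> bool" where
  "is_spl F \<phi> Prg \<longleftrightarrow> finite F \<and> fvars \<phi> \<subseteq> F \<and> (\<forall>a \<in> prog_annots Prg. fvars a \<subseteq> F)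
     \<and> prog_wf Prg"

text \<open>AT(Prg(s)); AT(T). (For an undefined struct name, which cannot happen in a sane
 program, we use 0.)\<close>
definition AT_struct :: "'f form prog \<Rightarrow> sname \<Rightarrow> 'f form" where
  "AT_struct P s = (case lookup_struct P s of Some (a, _) \<Rightarrow> a | None \<Rightarrow> FFalse)"

fun AT_ty :: "'f form prog \<Rightarrow> ty \<Rightarrow> 'f form" where
  "AT_ty P TInt = FTrue"
| "AT_ty P TVoidPtr = FTrue"
| "AT_ty P (TStructPtr s) = AT_struct P s"

definition exists_ann :: "('f form \<times> 'f form expr) list \<Rightarrow> 'f form" where
  "exists_ann es = foldr (\<lambda>(a, e) acc. FOr a acc) es FFalse"

text \<open>neverLast(k, (e1..en)) = !AT(ek) || AT(e_{k+1}) || ... || AT(en)  (k 0-based here)\<close>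
definition neverLast :: "nat \<Rightarrow> ('f form \<times> 'f form expr) list \<Rightarrow> 'f form" where
  "neverLast k es = FOr (FNot (fst (es ! k))) (exists_ann (drop (Suc k) es))"

type_synonym 'f aenv = "vname \<Rightarrow> (ty \<times> 'f form) option"

datatype 'f ft_judg =
    JPrg "'f form"
  | JStruct "'f form" "'f form sdef"
  | JFun "'f form" "'f form fdef"
  | JExp "'f form" "'f aenv" "'f form expr" ty

inductive ft_rule :: "'f form prog \<Rightarrow> 'f ft_judg list \<Rightarrow> 'f ft_judg \<Rightarrow> bool" for Prg where
  FT_prg: "sane Prg \<Longrightarrow> (\<exists>fd. lookup_fun Prg ''main'' = Some (FTrue, fd)) \<Longrightarrow>
     ft_rule Prg (map (\<lambda>(a, sd). JStruct (FAnd \<phi> a) sd) (sdefs Prg)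
                @ map (\<lambda>(a, fd). JFun (FAnd \<phi> a) fd) (fdefs Prg)) (JPrg \<phi>)"
| FT_struct: "(\<forall>(a, T, m) \<in> set ms. entails \<theta> (FImp a (AT_ty Prg T))) \<Longrightarrow>
     ft_rule Prg [] (JStruct \<theta> (SDef s ms))"
| FT_fun: "entails \<theta> (AT_ty Prg T0) \<Longrightarrow>
     (\<forall>(a, T, x) \<in> set xs. entails \<theta> (FImp a (AT_ty Prg T))) \<Longrightarrow>
     \<Delta> = map_of (map (\<lambda>(a, T, x). (x, (T, a))) xs) \<Longrightarrow>
     subty Prg T' T0 \<Longrightarrow>
     ft_rule Prg [JExp \<theta> \<Delta> e T'] (JFun \<theta> (FDef T0 f xs e))"
| FT_int: "ft_rule Prg [] (JExp \<theta> \<Delta> (Num n) TInt)"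
| FT_null: "ft_rule Prg [] (JExp \<theta> \<Delta> Null TVoidPtr)"
| FT_par: "\<Delta> x = Some (T, \<psi>) \<Longrightarrow> entails \<theta> \<psi> \<Longrightarrow> ft_rule Prg [] (JExp \<theta> \<Delta> (Par x) T)"
| FT_app: "lookup_fun Prg f = Some (af, FDef T0 f ps body) \<Longrightarrow> entails \<theta> af \<Longrightarrow>
     length args = length ps \<Longrightarrow> length Ts' = length args \<Longrightarrow>
     (\<forall>i < length args. subty Prg (Ts' ! i) (fst (snd (ps ! i)))
         \<and> entails \<theta> (FIff (fst (args ! i)) (fst (ps ! i)))) \<Longrightarrow>
     ft_rule Prg (map (\<lambda>((a, e), T'). JExp \<theta> \<Delta> e T') (zip args Ts')) (JExp \<theta> \<Delta> (Call f args) T0)"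
| FT_member: "lookup_member Prg s m = Some (am, T) \<Longrightarrow> entails \<theta> am \<Longrightarrow>
     ft_rule Prg [JExp \<theta> \<Delta> e0 (TStructPtr s)] (JExp \<theta> \<Delta> (Mem e0 m) T)"
| FT_assign: "lookup_member Prg s m = Some (am, T) \<Longrightarrow> entails \<theta> am \<Longrightarrow> subty Prg T1 T \<Longrightarrow>
     ft_rule Prg [JExp \<theta> \<Delta> e0 (TStructPtr s), JExp \<theta> \<Delta> e1 T1] (JExp \<theta> \<Delta> (Assign e0 m e1) T)"
| FT_cond: "is_max Prg T1 T2 T3 \<Longrightarrow>
     ft_rule Prg [JExp \<theta> \<Delta> e0 T0, JExp \<theta> \<Delta> e1 T1, JExp \<theta> \<Delta> e2 T2] (JExp \<theta> \<Delta> (Cond e0 e1 e2) T3)"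
| FT_seq: "entails \<theta> (exists_ann es) \<Longrightarrow> length Ts = length es \<Longrightarrow> es \<noteq> [] \<Longrightarrow>
     (\<forall>i < length es. Ts ! i \<noteq> last Ts \<longrightarrow> entails \<theta> (neverLast i es)) \<Longrightarrow>
     ft_rule Prg (map (\<lambda>((a, e), T). JExp (FAnd \<theta> a) \<Delta> e T) (zip es Ts)) (JExp \<theta> \<Delta> (Seq es) (last Ts))"
| FT_uop: "uop_ok u T0 \<Longrightarrow> ft_rule Prg [JExp \<theta> \<Delta> e0 T0] (JExp \<theta> \<Delta> (Uop u e0) TInt)"
| FT_bop: "is_max Prg T1 T2 T3 \<Longrightarrow> bop_ok b T3 \<Longrightarrow>
     ft_rule Prg [JExp \<theta> \<Delta> e1 T1, JExp \<theta> \<Delta> e2 T2] (JExp \<theta> \<Delta> (Bop b e1 e2) TInt)"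
| FT_malloc: "s \<in> struct_names Prg \<Longrightarrow> entails \<theta> (AT_struct Prg s) \<Longrightarrow>
     ft_rule Prg [] (JExp \<theta> \<Delta> (Malloc s) (TStructPtr s))"
| FT_mfree: "ft_rule Prg [JExp \<theta> \<Delta> e0 (TStructPtr s)] (JExp \<theta> \<Delta> (Mfree e0) TVoidPtr)"

fun vexp :: "'f set \<Rightarrow> 'f form expr \<Rightarrow> unit expr"
and vargs :: "'f set \<Rightarrow> ('f form \<times> 'f form expr) list \<Rightarrow> (unit \<times> unit expr) list" where
  "vexp p (Num n) = Num n"
| "vexp p Null = Null"
| "vexp p (Par x) = Par x"
| "vexp p (Call f args) = Call f (vargs p args)"
| "vexp p (Mem e m) = Mem (vexp p e) m"
| "vexp p (Assign e m e') = Assign (vexp p e) m (vexp p e')"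
| "vexp p (Cond e0 e1 e2) = Cond (vexp p e0) (vexp p e1) (vexp p e2)"
| "vexp p (Seq es) = Seq (vargs p es)"
| "vexp p (Uop u e) = Uop u (vexp p e)"
| "vexp p (Bop b e1 e2) = Bop b (vexp p e1) (vexp p e2)"
| "vexp p (Malloc s) = Malloc s"
| "vexp p (Mfree e) = Mfree (vexp p e)"
| "vargs p [] = []"
| "vargs p ((a, e) # es) = (if sat p a then ((), vexp p e) # vargs p es else vargs p es)"

fun vsdef :: "'f set \<Rightarrow> 'f form sdef \<Rightarrow> unit sdef" where
  "vsdef p (SDef s ms) = SDef s (map (\<lambda>(a, T, m). ((), T, m)) (filter (\<lambda>(a, T, m). sat p a) ms))"

fun vfdef :: "'f set \<Rightarrow> 'f form fdef \<Rightarrow> unit fdef" where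
  "vfdef p (FDef T f xs e) =
     FDef T f (map (\<lambda>(a, T, x). ((), T, x)) (filter (\<lambda>(a, T, x). sat p a) xs)) (vexp p e)"

fun vprog :: "'f set \<Rightarrow> 'f form prog \<Rightarrow> unit prog" where
  "vprog p (Prog sds fds) =
     Prog (map (\<lambda>(a, sd). ((), vsdef p sd)) (filter (\<lambda>(a, sd). sat p a) sds))
          (map (\<lambda>(a, fd). ((), vfdef p fd)) (filter (\<lambda>(a, fd). sat p a) fds))"

definition venv :: "'f set \<Rightarrow> 'f aenv \<Rightarrow> tenv" where
  "venv p \<Delta> = (\<lambda>x. case \<Delta> x of None \<Rightarrow> None | Some (T, \<psi>) \<Rightarrow> if sat p \<psi> then Some T else None)"

end

theory Submission
  imports Defs
begin

lemma sname_vsdef[simp]: "sname_of (vsdef p sd) = sname_of sd" by (cases sd) simp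
lemma fname_vfdef[simp]: "fname_of (vfdef p fd) = fname_of fd" by (cases fd) simp
lemma sdefs_vprog: "sdefs (vprog p P) = map (\<lambda>(a,sd). ((), vsdef p sd)) (filter (\<lambda>(a,sd). sat p a) (sdefs P))"
  by (cases P) simp
lemma fdefs_vprog: "fdefs (vprog p P) = map (\<lambda>(a,fd). ((), vfdef p fd)) (filter (\<lambda>(a,fd). sat p a) (fdefs P))"
  by (cases P) simp

lemma lookup_struct_in: "lookup_struct P s = Some (a, sd) \<Longrightarrow> (a, sd) \<in> set (sdefs P) \<and> sname_of sd = s"
  unfolding lookup_struct_def by (auto dest!: map_of_SomeD)
lemma lookup_fun_in: "lookup_fun P f = Some (a, fd) \<Longrightarrow> (a, fd) \<in> set (fdefs P) \<and> fname_of fd = f"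
  unfolding lookup_fun_def by (auto dest!: map_of_SomeD)

lemma lookup_struct_v:
  assumes "distinct (map (sname_of \<circ> snd) (sdefs P))" "lookup_struct P s = Some (a, sd)" "sat p a"
  shows "lookup_struct (vprog p P) s = Some ((), vsdef p sd)"
proof -
  from lookup_struct_in[OF assms(2)] have i: "(a, sd) \<in> set (sdefs P)" "sname_of sd = s" by auto
  have d: "distinct (map (sname_of \<circ> snd) (filter (\<lambda>(a,sd). sat p a) (sdefs P)))"
    using assms(1) by (simp add: distinct_map_filter)
  have "map fst (map (\<lambda>(a, sd). (sname_of sd, a, sd)) (sdefs (vprog p P))) = map (sname_of \<circ> snd) (filter (\<lambda>(a,sd). sat p a) (sdefs P))"
    by (simp add: sdefs_vprog case_prod_unfold)
  with d have d2: "distinct (map fst (map (\<lambda>(a, sd). (sname_of sd, a, sd)) (sdefs (vprog p P))))" by simp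
  have "(s, (), vsdef p sd) \<in> set (map (\<lambda>(a, sd). (sname_of sd, a, sd)) (sdefs (vprog p P)))"
    using i assms(3) by (force simp: sdefs_vprog)
  then show ?thesis unfolding lookup_struct_def using d2 by (simp add: map_of_is_SomeI)
qed

lemma lookup_fun_v:
  assumes "distinct (map (fname_of \<circ> snd) (fdefs P))" "lookup_fun P f = Some (a, fd)" "sat p a"
  shows "lookup_fun (vprog p P) f = Some ((), vfdef p fd)"
proof -
  from lookup_fun_in[OF assms(2)] have i: "(a, fd) \<in> set (fdefs P)" "fname_of fd = f" by auto
  have d: "distinct (map (fname_of \<circ> snd) (filter (\<lambda>(a,sd). sat p a) (fdefs P)))"
    using assms(1) by (simp add: distinct_map_filter)
  have "map fst (map (\<lambda>(a, sd). (fname_of sd, a, sd)) (fdefs (vprog p P))) = map (fname_of \<circ> snd) (filter (\<lambda>(a,sd). sat p a) (fdefs P))"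
    by (simp add: fdefs_vprog case_prod_unfold)
  with d have d2: "distinct (map fst (map (\<lambda>(a, sd). (fname_of sd, a, sd)) (fdefs (vprog p P))))" by simp
  have "(f, (), vfdef p fd) \<in> set (map (\<lambda>(a, sd). (fname_of sd, a, sd)) (fdefs (vprog p P)))"
    using i assms(3) by (force simp: fdefs_vprog)
  then show ?thesis unfolding lookup_fun_def using d2 by (simp add: map_of_is_SomeI)
qed

lemma sat_AT_struct_in: "sat p (AT_struct P s) \<Longrightarrow> \<exists>a sd. lookup_struct P s = Some (a, sd) \<and> sat p a"
  unfolding AT_struct_def by (auto split: option.splits)

lemma struct_names_v: "sat p (AT_struct P s) \<Longrightarrow> s \<in> struct_names (vprog p P)"
proof -
  assume "sat p (AT_struct P s)"
  then obtain a sd where l: "lookup_struct P s = Some (a, sd)" "sat p a" using sat_AT_struct_in by blast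
  from lookup_struct_in[OF l(1)] l(2) show ?thesis
    unfolding struct_names_def sdefs_vprog by (force simp: image_iff)
qed

lemma subty_v: "subty P T1 T2 \<Longrightarrow> sat p (AT_ty P T2) \<Longrightarrow> subty (vprog p P) T1 T2"
  unfolding subty_def using struct_names_v by fastforce

lemma is_max_v: "is_max P T1 T2 T3 \<Longrightarrow> sat p (AT_ty P T1) \<Longrightarrow> sat p (AT_ty P T2) \<Longrightarrow> is_max (vprog p P) T1 T2 T3"
  unfolding is_max_def using subty_v by blast

lemma member_decl_v:
  assumes "distinct (map (\<lambda>(a, T, m). m) ms)" "member_decl (SDef s ms) m = Some (am, T)" "sat p am"
  shows "member_decl (vsdef p (SDef s ms)) m = Some ((), T)"
proof -
  from assms(2) have i: "(am, T, m) \<in> set ms" by (auto dest!: map_of_SomeD)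
  have "map fst (map (\<lambda>(a, T, m'). (m', a, T)) (map (\<lambda>(a, T, m). ((), T, m)) (filter (\<lambda>(a, T, m). sat p a) ms)))
        = map (\<lambda>(a, T, m). m) (filter (\<lambda>(a, T, m). sat p a) ms)"
    by (simp add: case_prod_unfold)
  moreover have "distinct (map (\<lambda>(a, T, m). m) (filter (\<lambda>(a, T, m). sat p a) ms))"
    using assms(1) by (simp add: distinct_map_filter)
  moreover have "(m, (), T) \<in> set (map (\<lambda>(a, T, m'). (m', a, T)) (map (\<lambda>(a, T, m). ((), T, m)) (filter (\<lambda>(a, T, m). sat p a) ms)))"
    using i assms(3) by force
  ultimately show ?thesis unfolding vsdef.simps member_decl.simps by (metis map_of_is_SomeI)
qed
lemma lookup_member_v:
  assumes wf: "prog_wf P" and l: "lookup_member P s m = Some (am, T)"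
    and sa: "sat p (AT_struct P s)" and sm: "sat p am"
  shows "lookup_member (vprog p P) s m = Some ((), T)"
proof -
  obtain a sd where ls: "lookup_struct P s = Some (a, sd)" and md: "member_decl sd m = Some (am, T)"
    using l unfolding lookup_member_def by (auto split: option.splits)
  have "sat p a" using sa ls unfolding AT_struct_def by simp
  have i: "(a, sd) \<in> set (sdefs P)" using lookup_struct_in[OF ls] by auto
  obtain s' ms where sd: "sd = SDef s' ms" by (cases sd)
  have "sdef_wf sd" using wf i unfolding prog_wf_def by auto
  then have dm: "distinct (map (\<lambda>(a, T, m). m) ms)" using sd by simp
  have "lookup_struct (vprog p P) s = Some ((), vsdef p sd)"
    using lookup_struct_v[OF _ ls \<open>sat p a\<close>] wf unfolding prog_wf_def by auto
  then show ?thesis using member_decl_v[OF dm] md sd sm unfolding lookup_member_def by simp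
qed

fun vtys :: "'f set \<Rightarrow> ('f form \<times> 'f form expr) list \<Rightarrow> ty list \<Rightarrow> ty list" where
  "vtys p ((a, e) # es) (T # Ts) = (if sat p a then T # vtys p es Ts else vtys p es Ts)"
| "vtys p _ _ = []"

lemma build:
  "length Ts = length args \<Longrightarrow>
   (\<forall>i<length args. sat p (fst (args ! i)) \<longrightarrow> (\<exists>D. Q D \<and> droot D = LJ \<Gamma> (vexp p (snd (args ! i))) (Ts ! i))) \<Longrightarrow>
   \<exists>Ds. map droot Ds = map (\<lambda>((a, e), T). LJ \<Gamma> e T) (zip (vargs p args) (vtys p args Ts)) \<and> (\<forall>D\<in>set Ds. Q D)"
proof (induction args arbitrary: Ts)
  case Nil then show ?case by simp
next
  case (Cons x args)
  obtain a e where x: "x = (a, e)" by (cases x)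
  obtain T Ts' where Ts: "Ts = T # Ts'" using Cons.prems(1) by (cases Ts) auto
  have "\<exists>Ds. map droot Ds = map (\<lambda>((a, e), T). LJ \<Gamma> e T) (zip (vargs p args) (vtys p args Ts')) \<and> (\<forall>D\<in>set Ds. Q D)"
    apply (rule Cons.IH)
    using Cons.prems(1) Ts apply simp_all
    apply (intro allI impI)
    subgoal for i using Cons.prems(2)[rule_format, of "Suc i"] Ts by simp
    done
  then obtain Ds where Ds: "map droot Ds = map (\<lambda>((a, e), T). LJ \<Gamma> e T) (zip (vargs p args) (vtys p args Ts'))" "\<forall>D\<in>set Ds. Q D" by blast
  show ?case
  proof (cases "sat p a")
    case True
    then obtain D where "Q D" "droot D = LJ \<Gamma> (vexp p e) T" using Cons.prems(2) x Ts by fastforce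
    then show ?thesis using Ds True x Ts by (intro exI[of _ "D # Ds"]) auto
  next
    case False
    then show ?thesis using Ds x Ts by auto
  qed
qed

lemma vlen:
  "length Ts = length args \<Longrightarrow> length (vargs p args) = length (vtys p args Ts)"
  by (induction p args Ts rule: vtys.induct) auto

lemma app_lemma:
  "length ps = length args \<Longrightarrow> length Ts = length args \<Longrightarrow>
   (\<forall>i<length args. (sat p (fst (args ! i)) \<longleftrightarrow> sat p (fst (ps ! i))) \<and>
       (sat p (fst (args ! i)) \<longrightarrow> Q (Ts ! i) (fst (snd (ps ! i))))) \<Longrightarrow>
   list_all2 Q (vtys p args Ts) (map (\<lambda>(a, T, x). T) (filter (\<lambda>(a, T, x). sat p a) ps))"
proof (induction args arbitrary: ps Ts)
  case Nil then show ?case by simp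
next
  case (Cons x args)
  obtain a e where x: "x = (a, e)" by (cases x)
  obtain T Ts' where Ts: "Ts = T # Ts'" using Cons.prems(2) by (cases Ts) auto
  obtain q ps' where ps: "ps = q # ps'" using Cons.prems(1) by (cases ps) auto
  obtain b U y where q: "q = (b, U, y)" by (cases q)
  have IH: "list_all2 Q (vtys p args Ts') (map (\<lambda>(a, T, x). T) (filter (\<lambda>(a, T, x). sat p a) ps'))"
    apply (rule Cons.IH)
    using Cons.prems(1,2) Ts ps apply simp_all
    apply (intro allI impI)
    subgoal for i using Cons.prems(3)[rule_format, of "Suc i"] Ts ps by simp
    done
  have 0: "(sat p a \<longleftrightarrow> sat p b) \<and> (sat p a \<longrightarrow> Q T U)" using Cons.prems(3)[rule_format, of 0] x Ts ps q by simp
  show ?case using IH 0 x Ts ps q by (auto simp: case_prod_unfold)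
qed

lemma sat_exists_ann: "sat p (exists_ann es) \<longleftrightarrow> (\<exists>x\<in>set es. sat p (fst x))"
  unfolding exists_ann_def by (induction es) auto

lemma vtys_nil: "\<not> sat p (exists_ann es) \<Longrightarrow> vtys p es Ts = []"
  by (induction p es Ts rule: vtys.induct) (auto simp: sat_exists_ann)

lemma seq_last:
  "length Ts = length es \<Longrightarrow> sat p (exists_ann es) \<Longrightarrow>
   (\<forall>i<length es. Ts ! i \<noteq> last Ts \<longrightarrow> sat p (neverLast i es)) \<Longrightarrow>
   vtys p es Ts \<noteq> [] \<and> last (vtys p es Ts) = last Ts"
proof (induction es arbitrary: Ts)
  case Nil then show ?case by (simp add: sat_exists_ann)
next
  case (Cons x es)
  obtain a e where x: "x = (a, e)" by (cases x)
  obtain T Ts' where Ts: "Ts = T # Ts'" using Cons.prems(1) by (cases Ts) auto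
  show ?case
  proof (cases "es = []")
    case True
    then show ?thesis using Cons.prems x Ts by (simp add: sat_exists_ann)
  next
    case False
    then have Ts'ne: "Ts' \<noteq> []" using Cons.prems(1) Ts by auto
    then have lastTs: "last Ts = last Ts'" using Ts by simp
    show ?thesis
    proof (cases "sat p (exists_ann es)")
      case True
      have "vtys p es Ts' \<noteq> [] \<and> last (vtys p es Ts') = last Ts'"
        apply (rule Cons.IH)
        using Cons.prems(1) Ts True apply simp_all
        apply (intro allI impI)
        subgoal for i using Cons.prems(3)[rule_format, of "Suc i"] Ts lastTs by (simp add: neverLast_def)
        done
      then show ?thesis using x Ts lastTs by auto
    next
      case False
      then have sa: "sat p a" using Cons.prems(2) x by (auto simp: sat_exists_ann)
      have "T = last Ts"
        using Cons.prems(3)[rule_format, of 0] sa False x Ts lastTs by (cases "T = last Ts'") (auto simp: neverLast_def)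
      then show ?thesis using vtys_nil[OF False] sa x Ts by simp
    qed
  qed
qed


definition goodD :: "'f set \<Rightarrow> 'f form prog \<Rightarrow> lc_judg dtree \<Rightarrow> bool" where
  "goodD p P D \<longleftrightarrow> (\<forall>s\<in>dtree_snames D. sat p (AT_struct P s))"

definition env_ok :: "'f set \<Rightarrow> 'f form prog \<Rightarrow> 'f aenv \<Rightarrow> bool" where
  "env_ok p P \<Delta> \<longleftrightarrow> (\<forall>x T \<psi>. \<Delta> x = Some (T, \<psi>) \<longrightarrow> sat p \<psi> \<longrightarrow> sat p (AT_ty P T))"

lemma occurs_node: "occurs_in j' (DNode j ts) \<longleftrightarrow> j' = j \<or> (\<exists>t\<in>set ts. occurs_in j' t)"
  by (auto elim: occurs_in.cases intro: occurs_in.intros)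

lemma dtree_snames_node: "dtree_snames (DNode j ts) = lj_snames j \<union> (\<Union>t\<in>set ts. dtree_snames t)"
  unfolding dtree_snames_def occurs_node by blast

lemma ty_good: "sat p (AT_ty P T) \<longleftrightarrow> (\<forall>s\<in>ty_snames T. sat p (AT_struct P s))"
  by (cases T) auto

lemma goodD_root: "goodD p P D \<Longrightarrow> droot D = LJ \<Gamma> e T \<Longrightarrow>
    (\<forall>s\<in>expr_snames e. sat p (AT_struct P s)) \<and> sat p (AT_ty P T)"
  by (cases D) (auto simp: goodD_def dtree_snames_node ty_good)

lemma mk_node: "lc_rule V (map droot Ds) j \<Longrightarrow> \<forall>D\<in>set Ds. valid_dtree (lc_rule V) D \<and> goodD p P D \<Longrightarrow>
   \<forall>s\<in>lj_snames j. sat p (AT_struct P s) \<Longrightarrow>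
   \<exists>D'. valid_dtree (lc_rule V) D' \<and> droot D' = j \<and> goodD p P D'"
  by (intro exI[of _ "DNode j Ds"]) (auto simp: goodD_def dtree_snames_node intro: valid_dtree.intros)

lemma lj_good: "env_ok p P \<Delta> \<Longrightarrow> \<forall>s\<in>expr_snames e. sat p (AT_struct P s) \<Longrightarrow> sat p (AT_ty P T) \<Longrightarrow>
   \<forall>s\<in>lj_snames (LJ (venv p \<Delta>) e T). sat p (AT_struct P s)"
proof -
  assume env: "env_ok p P \<Delta>" and e: "\<forall>s\<in>expr_snames e. sat p (AT_struct P s)" and t: "sat p (AT_ty P T)"
  have "sat p (AT_ty P T')" if "T' \<in> ran (venv p \<Delta>)" for T'
  proof -
    from that obtain x where "venv p \<Delta> x = Some T'" by (auto simp: ran_def)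
    then obtain \<psi> where "\<Delta> x = Some (T', \<psi>)" "sat p \<psi>"
      unfolding venv_def by (auto split: option.splits if_splits)
    then show ?thesis using env unfolding env_ok_def by blast
  qed
  then show ?thesis using e t by (auto simp: ty_good)
qed

lemma args_snames_eq: "args_snames xs = (\<Union>(a, e)\<in>set xs. expr_snames e)"
  by (induction xs) auto

lemma children_good:
  assumes "map droot Ds = map (\<lambda>((a, e), T). LJ \<Gamma> e T) (zip xs Ys)" "length xs = length Ys"
    "\<forall>D\<in>set Ds. goodD p P D"
  shows "(\<forall>s\<in>args_snames xs. sat p (AT_struct P s)) \<and> (\<forall>T\<in>set Ys. sat p (AT_ty P T))"
proof -
  have r: "\<exists>D\<in>set Ds. droot D = LJ \<Gamma> e T" if "((a, e), T) \<in> set (zip xs Ys)" for a e T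
  proof -
    have "LJ \<Gamma> e T \<in> set (map droot Ds)" using assms(1) that by force
    then show ?thesis by auto
  qed
  have 1: "\<forall>s\<in>expr_snames e. sat p (AT_struct P s)" if h: "(a, e) \<in> set xs" for a e
  proof -
    obtain T where "((a, e), T) \<in> set (zip xs Ys)" using in_set_impl_in_set_zip1[OF assms(2) h] by blast
    then show ?thesis using r assms(3) goodD_root by blast
  qed
  have 2: "sat p (AT_ty P T)" if h: "T \<in> set Ys" for T
  proof -
    obtain x where "(x, T) \<in> set (zip xs Ys)" using in_set_impl_in_set_zip2[OF assms(2) h] by blast
    then obtain a e where "((a, e), T) \<in> set (zip xs Ys)" by (cases x) auto
    then show ?thesis using r assms(3) goodD_root by blast
  qed
  show ?thesis using 1 2 by (auto simp: args_snames_eq)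
qed

lemma ent: "entails \<theta> \<psi> \<Longrightarrow> sat p \<theta> \<Longrightarrow> sat p \<psi>"
  unfolding entails_def FImp_def by auto

lemma ent_iff: "entails \<theta> (FIff a b) \<Longrightarrow> sat p \<theta> \<Longrightarrow> sat p a \<longleftrightarrow> sat p b"
  unfolding entails_def FImp_def FIff_def by auto

context
  fixes Prg :: "'f form prog" and p :: "'f set"
  assumes wf: "prog_wf Prg"
    and A2: "\<And>a s ms am T m. (a, SDef s ms) \<in> set (sdefs Prg) \<Longrightarrow> (am, T, m) \<in> set ms \<Longrightarrow> sat p a \<Longrightarrow> sat p am \<Longrightarrow> sat p (AT_ty Prg T)"
    and A3: "\<And>af T0 f xs body. (af, FDef T0 f xs body) \<in> set (fdefs Prg) \<Longrightarrow> sat p af \<Longrightarrow>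
         sat p (AT_ty Prg T0) \<and> (\<forall>(a, T, x)\<in>set xs. sat p a \<longrightarrow> sat p (AT_ty Prg T))"
begin

lemma member_ty:
  assumes l: "lookup_member Prg s m = Some (am, T)" and sa: "sat p (AT_struct Prg s)" and sm: "sat p am"
  shows "sat p (AT_ty Prg T)"
proof -
  obtain a sd where ls: "lookup_struct Prg s = Some (a, sd)" and md: "member_decl sd m = Some (am, T)"
    using l unfolding lookup_member_def by (auto split: option.splits)
  have "sat p a" using sa ls unfolding AT_struct_def by simp
  have i: "(a, sd) \<in> set (sdefs Prg)" using lookup_struct_in[OF ls] by auto
  obtain s' ms where sd: "sd = SDef s' ms" by (cases sd)
  have "(am, T, m) \<in> set ms" using md sd by (auto dest!: map_of_SomeD)
  then show ?thesis using A2 i sd \<open>sat p a\<close> sm by blast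
qed


lemma main:
  "valid_dtree (ft_rule Prg) t \<Longrightarrow> \<forall>\<theta> \<Delta> e T. droot t = JExp \<theta> \<Delta> e T \<longrightarrow> sat p \<theta> \<longrightarrow> env_ok p Prg \<Delta> \<longrightarrow>
     (\<exists>D'. valid_dtree (lc_rule (vprog p Prg)) D' \<and> droot D' = LJ (venv p \<Delta>) (vexp p e) T \<and> goodD p Prg D')"
proof (induction rule: valid_dtree.induct)
  case (1 ts j)
  show ?case
  proof (intro allI impI)
    fix \<theta> \<Delta> e T
    assume jr: "droot (DNode j ts) = JExp \<theta> \<Delta> e T" and s\<theta>: "sat p \<theta>" and env: "env_ok p Prg \<Delta>"
    from jr have jj: "j = JExp \<theta> \<Delta> e T" by simp
    let ?V = "vprog p Prg" and ?\<Gamma> = "venv p \<Delta>"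
    have IH: "\<And>t \<theta>' e' T'. t \<in> set ts \<Longrightarrow> droot t = JExp \<theta>' \<Delta> e' T' \<Longrightarrow> sat p \<theta>' \<Longrightarrow>
       \<exists>D'. valid_dtree (lc_rule ?V) D' \<and> droot D' = LJ ?\<Gamma> (vexp p e') T' \<and> goodD p Prg D'"
      using 1(2) env by blast
    have ok: "\<And>D \<Gamma> e T. goodD p Prg D \<Longrightarrow> droot D = LJ \<Gamma> e T \<Longrightarrow>
        (\<forall>s\<in>expr_snames e. sat p (AT_struct Prg s)) \<and> sat p (AT_ty Prg T)"
      using goodD_root by blast
    from 1(1)[unfolded jj] show "\<exists>D'. valid_dtree (lc_rule ?V) D' \<and> droot D' = LJ ?\<Gamma> (vexp p e) T \<and> goodD p Prg D'"
    proof (cases rule: ft_rule.cases)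
      case (FT_int n)
      hence e: "e = Num n" "T = TInt" "ts = []" by auto
      have r: "lc_rule ?V (map droot []) (LJ ?\<Gamma> (Num n) TInt)" by (simp add: lc_rule.T_int)
      have g: "\<forall>s\<in>lj_snames (LJ ?\<Gamma> (Num n) TInt). sat p (AT_struct Prg s)" using env by (intro lj_good) auto
      from mk_node[OF r _ g] show ?thesis using e by simp
    next
      case FT_null
      hence e: "e = Null" "T = TVoidPtr" "ts = []" by auto
      have r: "lc_rule ?V (map droot []) (LJ ?\<Gamma> Null TVoidPtr)" by (simp add: lc_rule.T_null)
      have g: "\<forall>s\<in>lj_snames (LJ ?\<Gamma> Null TVoidPtr). sat p (AT_struct Prg s)" using env by (intro lj_good) auto
      from mk_node[OF r _ g] show ?thesis using e by simp
    next
      case (FT_par x \<psi>)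
      hence e: "e = Par x" "\<Delta> x = Some (T, \<psi>)" "entails \<theta> \<psi>" "ts = []" by auto
      have s\<psi>: "sat p \<psi>" using ent e(3) s\<theta> by blast
      have "?\<Gamma> x = Some T" using e(2) s\<psi> by (simp add: venv_def)
      then have r: "lc_rule ?V (map droot []) (LJ ?\<Gamma> (Par x) T)" by (simp add: lc_rule.T_par)
      have "sat p (AT_ty Prg T)" using env e(2) s\<psi> unfolding env_ok_def by blast
      then have g: "\<forall>s\<in>lj_snames (LJ ?\<Gamma> (Par x) T). sat p (AT_struct Prg s)" using env by (intro lj_good) auto
      from mk_node[OF r _ g] show ?thesis using e by simp
    next
      case (FT_member s m am e0)
      hence e: "e = Mem e0 m" by auto
      obtain t0 where t0: "ts = [t0]" "droot t0 = JExp \<theta> \<Delta> e0 (TStructPtr s)" using FT_member(1) e by (auto simp: map_eq_Cons_conv)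
      obtain D0 where D0: "valid_dtree (lc_rule ?V) D0" "droot D0 = LJ ?\<Gamma> (vexp p e0) (TStructPtr s)" "goodD p Prg D0"
        using IH[of t0] t0 s\<theta> by auto
      have k0: "\<forall>s\<in>expr_snames (vexp p e0). sat p (AT_struct Prg s)" "sat p (AT_struct Prg s)"
        using ok[OF D0(3) D0(2)] by auto
      have sm: "sat p am" using ent FT_member(4) s\<theta> e by blast
      have lm: "lookup_member ?V s m = Some ((), T)" using lookup_member_v[OF wf _ k0(2) sm] FT_member(3) e by simp
      have tT: "sat p (AT_ty Prg T)" using member_ty[OF _ k0(2) sm] FT_member(3) e by simp
      have r: "lc_rule ?V (map droot [D0]) (LJ ?\<Gamma> (Mem (vexp p e0) m) T)"
        using lc_rule.T_member[OF lm] D0(2) by simp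
      have g: "\<forall>s\<in>lj_snames (LJ ?\<Gamma> (Mem (vexp p e0) m) T). sat p (AT_struct Prg s)"
        using env k0 tT by (intro lj_good) auto
      from mk_node[OF r _ g] show ?thesis using e D0 by simp
    next
      case (FT_assign s m am T1 e0 e1)
      hence e: "e = Assign e0 m e1" by auto
      obtain t0 t1 where t0: "ts = [t0, t1]" "droot t0 = JExp \<theta> \<Delta> e0 (TStructPtr s)" "droot t1 = JExp \<theta> \<Delta> e1 T1"
        using FT_assign(1) e by (auto simp: map_eq_Cons_conv)
      obtain D0 where D0: "valid_dtree (lc_rule ?V) D0" "droot D0 = LJ ?\<Gamma> (vexp p e0) (TStructPtr s)" "goodD p Prg D0"
        using IH[of t0] t0 s\<theta> by auto
      obtain D1 where D1: "valid_dtree (lc_rule ?V) D1" "droot D1 = LJ ?\<Gamma> (vexp p e1) T1" "goodD p Prg D1"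
        using IH[of t1] t0 s\<theta> by auto
      have k0: "\<forall>s\<in>expr_snames (vexp p e0). sat p (AT_struct Prg s)" "sat p (AT_struct Prg s)"
        using ok[OF D0(3) D0(2)] by auto
      have k1: "\<forall>s\<in>expr_snames (vexp p e1). sat p (AT_struct Prg s)" "sat p (AT_ty Prg T1)"
        using ok[OF D1(3) D1(2)] by auto
      have sm: "sat p am" using ent FT_assign(4) s\<theta> e by blast
      have lm: "lookup_member ?V s m = Some ((), T)" using lookup_member_v[OF wf _ k0(2) sm] FT_assign(3) e by simp
      have tT: "sat p (AT_ty Prg T)" using member_ty[OF _ k0(2) sm] FT_assign(3) e by simp
      have st: "subty ?V T1 T" using subty_v[OF _ tT] FT_assign(5) e by simp
      have r: "lc_rule ?V (map droot [D0, D1]) (LJ ?\<Gamma> (Assign (vexp p e0) m (vexp p e1)) T)"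
        using lc_rule.T_assign[OF lm st] D0(2) D1(2) by simp
      have g: "\<forall>s\<in>lj_snames (LJ ?\<Gamma> (Assign (vexp p e0) m (vexp p e1)) T). sat p (AT_struct Prg s)"
        using env k0 k1 tT by (intro lj_good) auto
      from mk_node[OF r _ g] show ?thesis using e D0 D1 by simp
    next
      case (FT_cond T1 T2 e0 T0 e1 e2)
      hence e: "e = Cond e0 e1 e2" by auto
      obtain t0 t1 t2 where t0: "ts = [t0, t1, t2]" "droot t0 = JExp \<theta> \<Delta> e0 T0" "droot t1 = JExp \<theta> \<Delta> e1 T1"
          "droot t2 = JExp \<theta> \<Delta> e2 T2"
        using FT_cond(1) e by (auto simp: map_eq_Cons_conv)
      obtain D0 where D0: "valid_dtree (lc_rule ?V) D0" "droot D0 = LJ ?\<Gamma> (vexp p e0) T0" "goodD p Prg D0"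
        using IH[of t0] t0 s\<theta> by auto
      obtain D1 where D1: "valid_dtree (lc_rule ?V) D1" "droot D1 = LJ ?\<Gamma> (vexp p e1) T1" "goodD p Prg D1"
        using IH[of t1] t0 s\<theta> by auto
      obtain D2 where D2: "valid_dtree (lc_rule ?V) D2" "droot D2 = LJ ?\<Gamma> (vexp p e2) T2" "goodD p Prg D2"
        using IH[of t2] t0 s\<theta> by auto
      have k0: "\<forall>s\<in>expr_snames (vexp p e0). sat p (AT_struct Prg s)"
        using ok[OF D0(3) D0(2)] by auto
      have k1: "\<forall>s\<in>expr_snames (vexp p e1). sat p (AT_struct Prg s)" "sat p (AT_ty Prg T1)"
        using ok[OF D1(3) D1(2)] by auto
      have k2: "\<forall>s\<in>expr_snames (vexp p e2). sat p (AT_struct Prg s)" "sat p (AT_ty Prg T2)"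
        using ok[OF D2(3) D2(2)] by auto
      have im: "is_max ?V T1 T2 T" using is_max_v[OF _ k1(2) k2(2)] FT_cond(3) e by simp
      have tT: "sat p (AT_ty Prg T)" using FT_cond(3) e k1(2) k2(2) unfolding is_max_def by auto
      have r: "lc_rule ?V (map droot [D0, D1, D2]) (LJ ?\<Gamma> (Cond (vexp p e0) (vexp p e1) (vexp p e2)) T)"
        using lc_rule.T_cond[OF im] D0(2) D1(2) D2(2) by simp
      have g: "\<forall>s\<in>lj_snames (LJ ?\<Gamma> (Cond (vexp p e0) (vexp p e1) (vexp p e2)) T). sat p (AT_struct Prg s)"
        using env k0 k1 k2 tT by (intro lj_good) auto
      from mk_node[OF r _ g] show ?thesis using e D0 D1 D2 by simp
    next
      case (FT_uop u T0 e0)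
      hence e: "e = Uop u e0" "T = TInt" by auto
      obtain t0 where t0: "ts = [t0]" "droot t0 = JExp \<theta> \<Delta> e0 T0" using FT_uop(1) e by (auto simp: map_eq_Cons_conv)
      obtain D0 where D0: "valid_dtree (lc_rule ?V) D0" "droot D0 = LJ ?\<Gamma> (vexp p e0) T0" "goodD p Prg D0"
        using IH[of t0] t0 s\<theta> by auto
      have k0: "\<forall>s\<in>expr_snames (vexp p e0). sat p (AT_struct Prg s)"
        using ok[OF D0(3) D0(2)] by auto
      have r: "lc_rule ?V (map droot [D0]) (LJ ?\<Gamma> (Uop u (vexp p e0)) TInt)"
        using lc_rule.T_uop[OF FT_uop(4)] D0(2) by simp
      have g: "\<forall>s\<in>lj_snames (LJ ?\<Gamma> (Uop u (vexp p e0)) TInt). sat p (AT_struct Prg s)"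
        using env k0 by (intro lj_good) auto
      from mk_node[OF r _ g] show ?thesis using e D0 by simp
    next
      case (FT_bop T1 T2 T3 b e1 e2)
      hence e: "e = Bop b e1 e2" "T = TInt" by auto
      obtain t1 t2 where t0: "ts = [t1, t2]" "droot t1 = JExp \<theta> \<Delta> e1 T1" "droot t2 = JExp \<theta> \<Delta> e2 T2"
        using FT_bop(1) e by (auto simp: map_eq_Cons_conv)
      obtain D1 where D1: "valid_dtree (lc_rule ?V) D1" "droot D1 = LJ ?\<Gamma> (vexp p e1) T1" "goodD p Prg D1"
        using IH[of t1] t0 s\<theta> by auto
      obtain D2 where D2: "valid_dtree (lc_rule ?V) D2" "droot D2 = LJ ?\<Gamma> (vexp p e2) T2" "goodD p Prg D2"
        using IH[of t2] t0 s\<theta> by auto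
      have k1: "\<forall>s\<in>expr_snames (vexp p e1). sat p (AT_struct Prg s)" "sat p (AT_ty Prg T1)"
        using ok[OF D1(3) D1(2)] by auto
      have k2: "\<forall>s\<in>expr_snames (vexp p e2). sat p (AT_struct Prg s)" "sat p (AT_ty Prg T2)"
        using ok[OF D2(3) D2(2)] by auto
      have im: "is_max ?V T1 T2 T3" using is_max_v[OF FT_bop(4) k1(2) k2(2)] .
      have r: "lc_rule ?V (map droot [D1, D2]) (LJ ?\<Gamma> (Bop b (vexp p e1) (vexp p e2)) TInt)"
        using lc_rule.T_bop[OF im FT_bop(5)] D1(2) D2(2) by simp
      have g: "\<forall>s\<in>lj_snames (LJ ?\<Gamma> (Bop b (vexp p e1) (vexp p e2)) TInt). sat p (AT_struct Prg s)"
        using env k1 k2 by (intro lj_good) auto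
      from mk_node[OF r _ g] show ?thesis using e D1 D2 by simp
    next
      case (FT_malloc s)
      hence e: "e = Malloc s" "T = TStructPtr s" "ts = []" by auto
      have ss: "sat p (AT_struct Prg s)" using ent FT_malloc(5) s\<theta> e by blast
      have r: "lc_rule ?V (map droot []) (LJ ?\<Gamma> (Malloc s) (TStructPtr s))"
        using lc_rule.T_malloc[OF struct_names_v[OF ss]] by simp
      have g: "\<forall>s\<in>lj_snames (LJ ?\<Gamma> (Malloc s) (TStructPtr s)). sat p (AT_struct Prg s)" using env ss by (intro lj_good) auto
      from mk_node[OF r _ g] show ?thesis using e by simp
    next
      case (FT_mfree e0 s)
      hence e: "e = Mfree e0" "T = TVoidPtr" by auto
      obtain t0 where t0: "ts = [t0]" "droot t0 = JExp \<theta> \<Delta> e0 (TStructPtr s)" using FT_mfree(1) e by (auto simp: map_eq_Cons_conv)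
      obtain D0 where D0: "valid_dtree (lc_rule ?V) D0" "droot D0 = LJ ?\<Gamma> (vexp p e0) (TStructPtr s)" "goodD p Prg D0"
        using IH[of t0] t0 s\<theta> by auto
      have k0: "\<forall>s\<in>expr_snames (vexp p e0). sat p (AT_struct Prg s)"
        using ok[OF D0(3) D0(2)] by auto
      have r: "lc_rule ?V (map droot [D0]) (LJ ?\<Gamma> (Mfree (vexp p e0)) TVoidPtr)"
        using lc_rule.T_mfree D0(2) by simp
      have g: "\<forall>s\<in>lj_snames (LJ ?\<Gamma> (Mfree (vexp p e0)) TVoidPtr). sat p (AT_struct Prg s)"
        using env k0 by (intro lj_good) auto
      from mk_node[OF r _ g] show ?thesis using e D0 by simp
    next
      case (FT_app f af ps body args Ts')
      hence e: "e = Call f args" by auto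
      have mts: "map droot ts = map2 (\<lambda>(a, e). JExp \<theta> \<Delta> e) args Ts'" using FT_app(1) e by simp
      have lts: "length ts = length args" using arg_cong[OF mts, of length] FT_app(6) by simp
      have dr: "droot (ts ! i) = JExp \<theta> \<Delta> (snd (args ! i)) (Ts' ! i)" if "i < length args" for i
      proof -
        have "map droot ts ! i = map2 (\<lambda>(a, e). JExp \<theta> \<Delta> e) args Ts' ! i" using mts by simp
        then show ?thesis using that lts FT_app(6) by (simp add: case_prod_unfold)
      qed
      have "\<exists>Ds. map droot Ds = map (\<lambda>((a, e), T). LJ ?\<Gamma> e T) (zip (vargs p args) (vtys p args Ts')) \<and>
          (\<forall>D\<in>set Ds. valid_dtree (lc_rule ?V) D \<and> goodD p Prg D)"
        apply (rule build)
        using FT_app(6) apply simp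
        using IH dr lts s\<theta> by (metis nth_mem)
      then obtain Ds where Ds: "map droot Ds = map (\<lambda>((a, e), T). LJ ?\<Gamma> e T) (zip (vargs p args) (vtys p args Ts'))"
          "\<forall>D\<in>set Ds. valid_dtree (lc_rule ?V) D \<and> goodD p Prg D" by blast
      have saf: "sat p af" using ent FT_app(4) s\<theta> e by blast
      have fin: "(af, FDef T f ps body) \<in> set (fdefs Prg)" using lookup_fun_in[OF FT_app(3)] by simp
      have A3': "sat p (AT_ty Prg T)" "\<forall>(a, T, x)\<in>set ps. sat p a \<longrightarrow> sat p (AT_ty Prg T)"
        using A3[OF fin saf] by auto
      have lfv: "lookup_fun ?V f = Some ((), vfdef p (FDef T f ps body))"
        using lookup_fun_v[OF _ FT_app(3) saf] wf unfolding prog_wf_def by simp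
      let ?flt = "filter (\<lambda>(a, T, x). sat p a) ps"
      let ?ps' = "map (\<lambda>(a, T, x). ((), T, x)) ?flt"
      have la: "list_all2 (subty ?V) (vtys p args Ts') (map (\<lambda>(a, T, x). T) ?flt)"
      proof (rule app_lemma)
        show "length ps = length args" using FT_app(5) by simp
        show "length Ts' = length args" using FT_app(6) by simp
        show "\<forall>i<length args. (sat p (fst (args ! i)) \<longleftrightarrow> sat p (fst (ps ! i))) \<and>
            (sat p (fst (args ! i)) \<longrightarrow> subty ?V (Ts' ! i) (fst (snd (ps ! i))))"
        proof (intro allI impI conjI)
          fix i assume i: "i < length args"
          have iff: "sat p (fst (args ! i)) \<longleftrightarrow> sat p (fst (ps ! i))"
            using ent_iff FT_app(7) i s\<theta> e by blast
          then show "sat p (fst (args ! i)) \<longleftrightarrow> sat p (fst (ps ! i))" .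
          assume sa: "sat p (fst (args ! i))"
          have "ps ! i \<in> set ps" using i FT_app(5) by simp
          then have "sat p (AT_ty Prg (fst (snd (ps ! i))))" using A3'(2) iff sa by (auto simp: case_prod_unfold)
          then show "subty ?V (Ts' ! i) (fst (snd (ps ! i)))" using subty_v FT_app(7) i e by blast
        qed
      qed
      have vl: "length (vargs p args) = length (vtys p args Ts')" by (rule vlen[OF FT_app(6)])
      have la2: "length (vtys p args Ts') = length ?ps'" "\<forall>i<length (vtys p args Ts'). subty ?V (vtys p args Ts' ! i) (fst (snd (?ps' ! i)))"
        using la unfolding list_all2_conv_all_nth by (auto simp: case_prod_unfold)
      have r: "lc_rule ?V (map droot Ds) (LJ ?\<Gamma> (Call f (vargs p args)) T)"
        unfolding Ds(1)
        apply (rule lc_rule.T_app[where ps="?ps'" and b="()" and body="vexp p body"])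
        using lfv la2 vl by auto
      have cg: "\<forall>s\<in>args_snames (vargs p args). sat p (AT_struct Prg s)"
        using children_good[OF Ds(1) vl] Ds(2) by blast
      have g: "\<forall>s\<in>lj_snames (LJ ?\<Gamma> (Call f (vargs p args)) T). sat p (AT_struct Prg s)"
        using env cg A3'(1) by (intro lj_good) auto
      from mk_node[OF r Ds(2) g] show ?thesis using e by simp
    next
      case (FT_seq es Ts)
      hence e: "e = Seq es" "last Ts = T" by auto
      have mts: "map droot ts = map2 (\<lambda>(a, e). JExp (FAnd \<theta> a) \<Delta> e) es Ts" using FT_seq(1) e by simp
      have lts: "length ts = length es" using arg_cong[OF mts, of length] FT_seq(5) by simp
      have dr: "droot (ts ! i) = JExp (FAnd \<theta> (fst (es ! i))) \<Delta> (snd (es ! i)) (Ts ! i)" if "i < length es" for i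
      proof -
        have "map droot ts ! i = map2 (\<lambda>(a, e). JExp (FAnd \<theta> a) \<Delta> e) es Ts ! i" using mts by simp
        then show ?thesis using that lts FT_seq(5) by (simp add: case_prod_unfold)
      qed
      have "\<exists>Ds. map droot Ds = map (\<lambda>((a, e), T). LJ ?\<Gamma> e T) (zip (vargs p es) (vtys p es Ts)) \<and>
          (\<forall>D\<in>set Ds. valid_dtree (lc_rule ?V) D \<and> goodD p Prg D)"
      proof (rule build)
        show "length Ts = length es" using FT_seq(5) .
        show "\<forall>i<length es. sat p (fst (es ! i)) \<longrightarrow> (\<exists>D. (valid_dtree (lc_rule ?V) D \<and> goodD p Prg D) \<and>
              droot D = LJ ?\<Gamma> (vexp p (snd (es ! i))) (Ts ! i))"
        proof (intro allI impI)
          fix i assume i: "i < length es" and sa: "sat p (fst (es ! i))"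
          have "ts ! i \<in> set ts" using i lts by simp
          moreover have "sat p (FAnd \<theta> (fst (es ! i)))" using s\<theta> sa by simp
          ultimately show "\<exists>D. (valid_dtree (lc_rule ?V) D \<and> goodD p Prg D) \<and>
              droot D = LJ ?\<Gamma> (vexp p (snd (es ! i))) (Ts ! i)" using IH dr[OF i] by blast
        qed
      qed
      then obtain Ds where Ds: "map droot Ds = map (\<lambda>((a, e), T). LJ ?\<Gamma> e T) (zip (vargs p es) (vtys p es Ts))"
          "\<forall>D\<in>set Ds. valid_dtree (lc_rule ?V) D \<and> goodD p Prg D" by blast
      have sl: "vtys p es Ts \<noteq> [] \<and> last (vtys p es Ts) = last Ts"
      proof (rule seq_last)
        show "length Ts = length es" using FT_seq(5) .
        show "sat p (exists_ann es)" using ent FT_seq(4) s\<theta> e by blast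
        show "\<forall>i<length es. Ts ! i \<noteq> last Ts \<longrightarrow> sat p (neverLast i es)"
          using ent FT_seq(7) s\<theta> e by blast
      qed
      have vl: "length (vargs p es) = length (vtys p es Ts)" by (rule vlen[OF FT_seq(5)])
      have r0: "lc_rule ?V (map droot Ds) (LJ ?\<Gamma> (Seq (vargs p es)) (last (vtys p es Ts)))"
        unfolding Ds(1)
        apply (rule lc_rule.T_seq)
        using sl vl by auto
      then have r: "lc_rule ?V (map droot Ds) (LJ ?\<Gamma> (Seq (vargs p es)) T)" using sl e by simp
      have cg: "\<forall>s\<in>args_snames (vargs p es). sat p (AT_struct Prg s)" "\<forall>T\<in>set (vtys p es Ts). sat p (AT_ty Prg T)"
        using children_good[OF Ds(1) vl] Ds(2) by blast+
      have "sat p (AT_ty Prg T)" using cg(2) sl e by (metis last_in_set)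
      then have g: "\<forall>s\<in>lj_snames (LJ ?\<Gamma> (Seq (vargs p es)) T). sat p (AT_struct Prg s)"
        using env cg by (intro lj_good) auto
      from mk_node[OF r Ds(2) g] show ?thesis using e by simp
    qed
  qed
qed

end


lemma valid_node: "valid_dtree R (DNode j ts) \<Longrightarrow> R (map droot ts) j \<and> (\<forall>t\<in>set ts. valid_dtree R t)"
  by (auto elim: valid_dtree.cases)

lemma child_exp: "ft_rule Prg js (JExp \<theta> \<Delta> e T) \<Longrightarrow> j \<in> set js \<Longrightarrow>
   \<exists>\<theta>' e' T'. j = JExp \<theta>' \<Delta> e' T' \<and> (\<forall>p. sat p \<theta>' \<longrightarrow> sat p \<theta>)"
  by (cases rule: ft_rule.cases) (auto simp: case_prod_unfold)

lemma occ_exp: "occurs_in j t \<Longrightarrow> valid_dtree (ft_rule Prg) t \<Longrightarrow> droot t = JExp \<theta>0 \<Delta> e0 T0 \<Longrightarrow>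
   \<exists>\<theta> e T t'. j = JExp \<theta> \<Delta> e T \<and> (\<forall>p. sat p \<theta> \<longrightarrow> sat p \<theta>0) \<and> valid_dtree (ft_rule Prg) t' \<and> droot t' = j"
proof (induction arbitrary: \<theta>0 e0 T0 rule: occurs_in.induct)
  case (1 j ts)
  then show ?case by auto
next
  case (2 t ts j j')
  from valid_node[OF 2(4)] have r: "ft_rule Prg (map droot ts) j'" and v: "valid_dtree (ft_rule Prg) t"
    using 2(1) by auto
  have "droot t \<in> set (map droot ts)" using 2(1) by simp
  then obtain \<theta>' e' T' where c: "droot t = JExp \<theta>' \<Delta> e' T'" "\<forall>p. sat p \<theta>' \<longrightarrow> sat p \<theta>0"
    using child_exp[of Prg _ \<theta>0 \<Delta> e0 T0] r 2(5) by force
  from 2(3)[OF v c(1)] c(2) show ?case by blast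
qed

lemma struct_node: "valid_dtree (ft_rule Prg) t \<Longrightarrow> droot t = JStruct \<theta> (SDef s ms) \<Longrightarrow>
   (\<forall>(a, T, m)\<in>set ms. entails \<theta> (FImp a (AT_ty Prg T))) \<and> t = DNode (JStruct \<theta> (SDef s ms)) []"
proof -
  assume v: "valid_dtree (ft_rule Prg) t" and d: "droot t = JStruct \<theta> (SDef s ms)"
  obtain j cs where t: "t = DNode j cs" by (cases t)
  from valid_node[OF v[unfolded t]] d t have "ft_rule Prg (map droot cs) (JStruct \<theta> (SDef s ms))" by simp
  then show ?thesis using t d by (cases rule: ft_rule.cases) auto
qed

lemma fun_node: "valid_dtree (ft_rule Prg) t \<Longrightarrow> droot t = JFun \<theta> (FDef T0 f xs body) \<Longrightarrow>
   entails \<theta> (AT_ty Prg T0) \<and> (\<forall>(a, T, x)\<in>set xs. entails \<theta> (FImp a (AT_ty Prg T))) \<and>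
   (\<exists>c T'. t = DNode (JFun \<theta> (FDef T0 f xs body)) [c] \<and> valid_dtree (ft_rule Prg) c \<and>
       droot c = JExp \<theta> (map_of (map (\<lambda>(a, T, x). (x, (T, a))) xs)) body T')"
proof -
  assume v: "valid_dtree (ft_rule Prg) t" and d: "droot t = JFun \<theta> (FDef T0 f xs body)"
  obtain j cs where t: "t = DNode j cs" by (cases t)
  from valid_node[OF v[unfolded t]] d t have r: "ft_rule Prg (map droot cs) (JFun \<theta> (FDef T0 f xs body))"
    and vc: "\<forall>c\<in>set cs. valid_dtree (ft_rule Prg) c" by simp_all
  from r show ?thesis using t d vc by (cases rule: ft_rule.cases) (auto simp: map_eq_Cons_conv)
qed

lemma sat_struct_names: "sat p (AT_struct P s) \<Longrightarrow> s \<in> struct_names P"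
proof -
  assume "sat p (AT_struct P s)"
  then obtain a sd where "lookup_struct P s = Some (a, sd)" using sat_AT_struct_in by blast
  then have "(a, sd) \<in> set (sdefs P) \<and> sname_of sd = s" by (rule lookup_struct_in)
  then show ?thesis unfolding struct_names_def by force
qed


theorem theorem3:
  fixes F :: "'f set" and \<phi> :: "'f form" and Prg :: "'f form prog" and p :: "'f set"
    and D :: "'f ft_judg dtree"
    and \<theta> :: "'f form" and \<Delta> :: "'f aenv" and e :: "'f form expr" and T :: ty
  assumes spl: "is_spl F \<phi> Prg"
    and prod: "valid_product F \<phi> p"
    and deriv: "valid_dtree (ft_rule Prg) D" and root: "droot D = JPrg \<phi>"
    and occ: "occurs_in (JExp \<theta> \<Delta> e T) D"
    and sat: "sat p \<theta>"
  shows "\<exists>D'. valid_dtree (lc_rule (vprog p Prg)) D'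
            \<and> droot D' = LJ (venv p \<Delta>) (vexp p e) T
            \<and> (\<forall>s \<in> dtree_snames D'. s \<in> struct_names Prg \<and> sat p (AT_struct Prg s))"
proof -
  obtain ts where D: "D = DNode (JPrg \<phi>) ts" using root by (cases D) auto
  from valid_node[OF deriv[unfolded D]] have r: "ft_rule Prg (map droot ts) (JPrg \<phi>)"
    and vts: "\<forall>t\<in>set ts. valid_dtree (ft_rule Prg) t" by auto
  have mts: "map droot ts = map (\<lambda>(a, sd). JStruct (FAnd \<phi> a) sd) (sdefs Prg)
                @ map (\<lambda>(a, fd). JFun (FAnd \<phi> a) fd) (fdefs Prg)"
    using r by (cases rule: ft_rule.cases) auto
  have wf: "prog_wf Prg" using spl unfolding is_spl_def by simp
  have s\<phi>: "sat p \<phi>" using prod unfolding valid_product_def by simp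
  have inroots: "\<exists>t\<in>set ts. droot t = J \<and> valid_dtree (ft_rule Prg) t" if "J \<in> set (map droot ts)" for J
    using vts that by auto
  have A2: "sat p (AT_ty Prg T)"
    if h: "(a, SDef s ms) \<in> set (sdefs Prg)" "(am, T, m) \<in> set ms" "sat p a" "sat p am" for a s ms am T m
  proof -
    have "JStruct (FAnd \<phi> a) (SDef s ms) \<in> set (map droot ts)" unfolding mts using h(1) by force
    then obtain t where t: "droot t = JStruct (FAnd \<phi> a) (SDef s ms)" "valid_dtree (ft_rule Prg) t"
      using inroots by blast
    have "\<forall>(a', T', m')\<in>set ms. entails (FAnd \<phi> a) (FImp a' (AT_ty Prg T'))"
      using struct_node[OF t(2) t(1)] by blast
    then have "entails (FAnd \<phi> a) (FImp am (AT_ty Prg T))" using h(2) by blast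
    then show ?thesis using s\<phi> h unfolding entails_def FImp_def by auto
  qed
  have A3: "sat p (AT_ty Prg T0) \<and> (\<forall>(a, T, x)\<in>set xs. sat p a \<longrightarrow> sat p (AT_ty Prg T))"
    if h: "(af, FDef T0 f xs body) \<in> set (fdefs Prg)" "sat p af" for af T0 f xs body
  proof -
    have "JFun (FAnd \<phi> af) (FDef T0 f xs body) \<in> set (map droot ts)" unfolding mts using h(1) by force
    then obtain t where t: "droot t = JFun (FAnd \<phi> af) (FDef T0 f xs body)" "valid_dtree (ft_rule Prg) t"
      using inroots by blast
    from fun_node[OF t(2) t(1)] have
      "entails (FAnd \<phi> af) (AT_ty Prg T0)" "\<forall>(a, T, x)\<in>set xs. entails (FAnd \<phi> af) (FImp a (AT_ty Prg T))"
      by blast+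
    then show ?thesis using s\<phi> h unfolding entails_def FImp_def by fastforce
  qed
  from occ[unfolded D occurs_node] obtain t where t: "t \<in> set ts" "occurs_in (JExp \<theta> \<Delta> e T) t" by auto
  have vt: "valid_dtree (ft_rule Prg) t" using vts t(1) by blast
  have "droot t \<in> set (map droot ts)" using t(1) by simp
  then consider (S) a sd where "(a, sd) \<in> set (sdefs Prg)" "droot t = JStruct (FAnd \<phi> a) sd"
    | (Fn) af fd where "(af, fd) \<in> set (fdefs Prg)" "droot t = JFun (FAnd \<phi> af) fd"
    unfolding mts by auto
  then show ?thesis
  proof cases
    case (S a sd)
    obtain s ms where sd: "sd = SDef s ms" by (cases sd)
    have "t = DNode (JStruct (FAnd \<phi> a) sd) []" using struct_node[OF vt] S sd by blast
    then show ?thesis using t(2) by (simp add: occurs_node)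
  next
    case (Fn af fd)
    obtain T0 f xs body where fd: "fd = FDef T0 f xs body" by (cases fd)
    from fun_node[OF vt] Fn fd obtain c T' where c: "t = DNode (JFun (FAnd \<phi> af) fd) [c]" "valid_dtree (ft_rule Prg) c"
      "droot c = JExp (FAnd \<phi> af) (map_of (map (\<lambda>(a, T, x). (x, (T, a))) xs)) body T'" by blast
    have oc: "occurs_in (JExp \<theta> \<Delta> e T) c" using t(2) c(1) by (simp add: occurs_node)
    from occ_exp[OF oc c(2) c(3)] obtain t' where
      o: "\<Delta> = map_of (map (\<lambda>(a, T, x). (x, (T, a))) xs)" "sat p \<theta> \<longrightarrow> sat p (FAnd \<phi> af)"
         "valid_dtree (ft_rule Prg) t'" "droot t' = JExp \<theta> \<Delta> e T" by auto
    have saf: "sat p af" using o(2) sat by simp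
    have env: "env_ok p Prg \<Delta>" unfolding env_ok_def
    proof (intro allI impI)
      fix x T'' \<psi> assume d: "\<Delta> x = Some (T'', \<psi>)" and s\<psi>: "sat p \<psi>"
      from d o(1) have "(\<psi>, T'', x) \<in> set xs" by (auto dest!: map_of_SomeD)
      then show "sat p (AT_ty Prg T'')" using A3[OF Fn(1)[unfolded fd] saf] s\<psi> by auto
    qed
    obtain D' where D': "valid_dtree (lc_rule (vprog p Prg)) D'" "droot D' = LJ (venv p \<Delta>) (vexp p e) T"
        "goodD p Prg D'"
    proof -
      have M: "\<forall>\<theta> \<Delta> e T. droot t' = JExp \<theta> \<Delta> e T \<longrightarrow> sat p \<theta> \<longrightarrow> env_ok p Prg \<Delta> \<longrightarrow>
         (\<exists>D'. valid_dtree (lc_rule (vprog p Prg)) D' \<and> droot D' = LJ (venv p \<Delta>) (vexp p e) T \<and> goodD p Prg D')"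
        apply (rule main[of Prg p])
           apply (rule wf)
          apply (rule A2; assumption)
         apply (rule A3; assumption)
        apply (rule o(3))
        done
      show ?thesis using M o(4) sat env that by blast
    qed
    then show ?thesis using sat_struct_names unfolding goodD_def by blast
  qed
qed

end
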